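(* For all $n,r\in\mathbb{N}$, the statistics $\operatorname{veh}$ and $\operatorname{des}$ have the same distribution over $\mathfrak{S}_n^r$, i.e. $\sum_{\pi\in\mathfrak{S}_n^r}t^{\operatorname{veh}(\pi)}=\sum_{\pi\in\mathfrak{S}_n^r}t^{\operatorname{des}(\pi)}$.
   Context: The stack-sorting operator $S$ on words with distinct positive integer letters: $S$ of the empty word is empty; if $w=LmR$ with $m$ the greatest letter, $S(w)=S(L)S(R)m$. $\mathfrak{S}_n^r=\{\pi\in\mathfrak{S}_n:S^r(\pi)=12\cdots n\}$. For $\pi=a_1\cdots a_n$, $\operatorname{des}(\pi)=|\{i\in[n-1]:a_i>a_{i+1}\}|$. The unordered decreasing tree $T(w;\infty)$ ($\infty$ larger than all letters): a single vertex $\infty$ if $w$ is empty; otherwise $w=m_1w_1\cdots m_kw_k$ with $m_i$ the left-to-right maxima, and $T(w;\infty)$ has root $\infty$ with subtrees $T(w_i;m_i)$ (same construction with root labeled $m_i$). $\operatorname{veh}(\pi)$ is the number of non-root vertices of even height (root at height $0$) in $T(\pi;\infty)$. *)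

theory Defs
  imports "HOL-Combinatorics.Multiset_Permutations" "HOL-Computational_Algebra.Polynomial"
begin

text \<open>Words are lists of natural numbers (distinct positive letters).
Stack-sorting: S [] = []; if w = L m R with m the greatest letter, S w = S L S R m.\<close>

function stack_sort :: "nat list \<Rightarrow> nat list" where
  "stack_sort w =
     (if w = [] then []
      else (let m = Max (set w);
                L = takeWhile (\<lambda>x. x \<noteq> m) w;
                R = tl (dropWhile (\<lambda>x. x \<noteq> m) w)
            in stack_sort L @ stack_sort R @ [m]))"
  by pat_completeness auto
termination
proof (relation "measure length")
  fix w :: "nat list" and m L
  assume "w \<noteq> []" "m = Max (set w)" "L = takeWhile (\<lambda>x. x \<noteq> m) w"
  then have "m \<in> set w" by simp
  then have "length (takeWhile (\<lambda>x. x \<noteq> m) w) < length w"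
    by (induction w) auto
  then show "(L, w) \<in> measure length"
    using \<open>L = _\<close> by simp
next
  fix w :: "nat list" and m R
  assume "w \<noteq> []" "m = Max (set w)" "R = tl (dropWhile (\<lambda>x. x \<noteq> m) w)"
  then show "(R, w) \<in> measure length"
    using length_dropWhile_le[of "\<lambda>x. x \<noteq> Max (set w)" w] by (cases w) auto
qed simp

definition sortable_perms :: "nat \<Rightarrow> nat \<Rightarrow> nat list set" where
  "sortable_perms n r =
     {\<pi> \<in> permutations_of_set {1..n}. (stack_sort ^^ r) \<pi> = [1..<n+1]}"

definition des :: "nat list \<Rightarrow> nat" where
  "des \<pi> = card {i. 1 \<le> i \<and> i < length \<pi> \<and> \<pi> ! (i - 1) > \<pi> ! i}"

text \<open>evh w b counts the vertices of the forest formed by the subtrees of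
T(w; root) (i.e. all non-root vertices) that lie at even height, where b says
whether the children of the root lie at even height.  Writing
w = m_1 w_1 ... m_k w_k with m_i the left-to-right maxima, the first block is
m_1 w_1 with w_1 = takeWhile (< m_1) of the rest, and the remaining blocks form
the rest of the word (their left-to-right maxima are the m_2,...,m_k).\<close>
function evh :: "nat list \<Rightarrow> bool \<Rightarrow> nat" where
  "evh [] b = 0"
| "evh (m # rest) b =
     (if b then 1 else 0)
     + evh (takeWhile (\<lambda>x. x < m) rest) (\<not> b)
     + evh (dropWhile (\<lambda>x. x < m) rest) b"
  by pat_completeness auto
termination
  by (relation "measure (\<lambda>(w, b). length w)")
     (auto simp: le_less_trans[OF length_takeWhile_le] le_less_trans[OF length_dropWhile_le])

text \<open>Root of T(\<pi>;\<infinity>) has height 0, so its children have odd height 1.\<close>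
definition veh :: "nat list \<Rightarrow> nat" where
  "veh \<pi> = evh \<pi> False"

end

theory Submission
  imports Defs
begin

declare stack_sort.simps[simp del]

lemma ss_Nil[simp]: "stack_sort [] = []"
  by (subst stack_sort.simps) simp

lemma split_max:
  assumes "m \<in> set w"
  shows "w = takeWhile (\<lambda>x. x \<noteq> m) w @ m # tl (dropWhile (\<lambda>x. x \<noteq> m) w)"
proof -
  have "dropWhile (\<lambda>x. x \<noteq> m) w \<noteq> []" using assms by (simp add: dropWhile_eq_Nil_conv)
  moreover have "hd (dropWhile (\<lambda>x. x \<noteq> m) w) = m" using assms
    by (metis (mono_tags) calculation hd_dropWhile)
  ultimately have "dropWhile (\<lambda>x. x \<noteq> m) w = m # tl (dropWhile (\<lambda>x. x \<noteq> m) w)"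
    by (metis list.collapse)
  then show ?thesis by (metis takeWhile_dropWhile_id)
qed

lemma ss_mid:
  assumes "\<forall>x\<in>set L. x < m" "\<forall>x\<in>set R. x < m"
  shows "stack_sort (L @ m # R) = stack_sort L @ stack_sort R @ [m]"
proof -
  have M: "Max (set (L @ m # R)) = m"
    using assms by (intro Max_eqI) auto
  have "m \<notin> set L" using assms by auto
  then have T: "takeWhile (\<lambda>x. x \<noteq> m) (L @ m # R) = L"
    by (simp add: takeWhile_tail) (metis append_Nil2 takeWhile_append2 takeWhile_tail)
  have D: "dropWhile (\<lambda>x. x \<noteq> m) (L @ m # R) = m # R"
    using \<open>m \<notin> set L\<close> by (simp add: dropWhile_append3) (metis dropWhile_append2 append.simps(1))
  show ?thesis
    apply (subst stack_sort.simps)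
    apply (simp only: Let_def M T D)
    apply simp
    done
qed

lemma mset_ss: "mset (stack_sort w) = mset w"
proof (induction w rule: stack_sort.induct)
  case (1 w)
  show ?case
  proof (cases "w = []")
    case True then show ?thesis by simp
  next
    case False
    define m where "m = Max (set w)"
    define L where "L = takeWhile (\<lambda>x. x \<noteq> m) w"
    define R where "R = tl (dropWhile (\<lambda>x. x \<noteq> m) w)"
    have mw: "m \<in> set w" using False m_def by simp
    have w: "w = L @ m # R" using split_max[OF mw] L_def R_def by simp
    have "stack_sort w = stack_sort L @ stack_sort R @ [m]"
      using False by (subst stack_sort.simps) (simp add: Let_def m_def L_def R_def)
    moreover have "mset (stack_sort L) = mset L" using 1(1) False m_def L_def by blast
    moreover have "mset (stack_sort R) = mset R" using 1(2) False m_def L_def R_def by blast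
    ultimately show ?thesis by (subst (2) w) simp
  qed
qed

lemma length_ss[simp]: "length (stack_sort w) = length w"
  by (metis mset_ss size_mset)
lemma set_ss[simp]: "set (stack_sort w) = set w"
  by (metis mset_ss set_mset_mset)

lemma evh_mid:
  assumes "\<forall>x\<in>set L. x < m" "\<forall>x\<in>set R. x < m"
  shows "evh (L @ m # R) b = (if b then 1 else 0) + evh L b + evh R (\<not> b)"
  using assms
proof (induction "length L" arbitrary: L b rule: less_induct)
  case less
  show ?case
  proof (cases L)
    case Nil
    have t1: "takeWhile (\<lambda>x. x < m) R = R" using less.prems by (simp add: takeWhile_eq_all_conv)
    have d1: "dropWhile (\<lambda>x. x < m) R = []" using less.prems by (simp add: dropWhile_eq_Nil_conv)
    show ?thesis unfolding Nil by (simp add: t1 d1)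
  next
    case (Cons a L')
    have am: "a < m" using less.prems Cons by simp
    have T: "takeWhile (\<lambda>x. x < a) (L' @ m # R) = takeWhile (\<lambda>x. x < a) L'"
      using am by (auto simp: takeWhile_append) (metis takeWhile_eq_all_conv)
    have D: "dropWhile (\<lambda>x. x < a) (L' @ m # R) = dropWhile (\<lambda>x. x < a) L' @ m # R"
      using am by (auto simp: dropWhile_append dropWhile_eq_Nil_conv)
    have len: "length (dropWhile (\<lambda>x. x < a) L') < length L"
      using Cons length_dropWhile_le[of _ L'] by (metis le_imp_less_Suc length_Cons)
    have sub: "\<forall>x\<in>set (dropWhile (\<lambda>x. x < a) L'). x < m"
      using less.prems Cons by (auto dest: set_dropWhileD)
    have IH: "evh (dropWhile (\<lambda>x. x < a) L' @ m # R) b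
       = (if b then 1 else 0) + evh (dropWhile (\<lambda>x. x < a) L') b + evh R (\<not> b)"
      using less.hyps[OF len sub less.prems(2)] .
    show ?thesis using Cons T D IH by simp
  qed
qed

fun dr :: "nat list \<Rightarrow> nat" where
  "dr [] = 0"
| "dr [a] = 0"
| "dr (a # b # w) = (if b < a then 1 else 0) + dr (b # w)"

lemma des_dr: "des w = dr w"
proof (induction w rule: dr.induct)
  case 1 then show ?case by (simp add: des_def)
next
  case (2 a) then show ?case by (simp add: des_def)
next
  case (3 a b w)
  let ?P = "\<lambda>xs i. 1 \<le> i \<and> i < length xs \<and> xs ! (i - 1) > xs ! i"
  have "{i. ?P (a#b#w) i} = (if b < a then {1} else {}) \<union> Suc ` {i. ?P (b#w) i}"
  proof (rule set_eqI)
    fix i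
    show "i \<in> {i. ?P (a#b#w) i} \<longleftrightarrow> i \<in> (if b < a then {1} else {}) \<union> Suc ` {i. ?P (b#w) i}"
    proof (cases i)
      case 0 then show ?thesis by auto
    next
      case (Suc j)
      show ?thesis
      proof (cases j)
        case 0 then show ?thesis using Suc by auto
      next
        case (Suc k)
        then show ?thesis using \<open>i = Suc j\<close> by (auto simp: image_iff)
      qed
    qed
  qed
  moreover have "finite {i. ?P (b#w) i}" by (rule finite_subset[of _ "{..<length (b#w)}"]) auto
  moreover have "1 \<notin> Suc ` {i. ?P (b#w) i}" by auto
  ultimately have "des (a#b#w) = (if b < a then 1 else 0) + des (b#w)"
    unfolding des_def by (simp add: card_image)
  then show ?case using 3 by simp
qed

lemma dr_mid:
  assumes "\<forall>x\<in>set L. x < m"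
  shows "dr (L @ m # R) = dr L + dr (m # R)"
  using assms
proof (induction L)
  case Nil then show ?case by simp
next
  case (Cons a L')
  then show ?case by (cases L') auto
qed

lemma dr_m: "\<forall>x\<in>set R. x < m \<Longrightarrow> dr (m # R) = (if R = [] then 0 else 1) + dr R"
  by (cases R) auto

lemma des_mid:
  assumes "\<forall>x\<in>set L. x < m" "\<forall>x\<in>set R. x < m"
  shows "des (L @ m # R) = des L + des R + (if R = [] then 0 else 1)"
  using assms by (simp add: des_dr dr_mid dr_m)

definition fib :: "nat list \<Rightarrow> nat list set" where
  "fib \<sigma> = {\<pi>. distinct \<pi> \<and> stack_sort \<pi> = \<sigma>}"

lemma fib_finite: "finite (fib \<sigma>)"
proof (rule finite_subset)
  show "fib \<sigma> \<subseteq> {xs. set xs \<subseteq> set \<sigma> \<and> length xs = length \<sigma>}"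
    unfolding fib_def by auto
  show "finite {xs. set xs \<subseteq> set \<sigma> \<and> length xs = length \<sigma>}"
    by (rule finite_lists_length_eq) simp
qed

lemma fib_Nil: "fib [] = {[]}"
  unfolding fib_def by (auto dest: arg_cong[of _ _ length])

lemma fib_image:
  assumes d: "distinct (\<sigma>' @ [m])" and lt: "\<forall>x\<in>set \<sigma>'. x < m"
  shows "fib (\<sigma>' @ [m]) = (\<lambda>(k, L, R). L @ m # R) `
           (SIGMA k:{..length \<sigma>'}. fib (take k \<sigma>') \<times> fib (drop k \<sigma>'))"
proof (rule set_eqI iffI)+
  fix \<pi> assume "\<pi> \<in> fib (\<sigma>' @ [m])"
  then have dp: "distinct \<pi>" and sp: "stack_sort \<pi> = \<sigma>' @ [m]" unfolding fib_def by auto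
  have setp: "set \<pi> = insert m (set \<sigma>')" using sp set_ss[of \<pi>] by simp
  have mp: "m \<in> set \<pi>" using setp by simp
  define L where "L = takeWhile (\<lambda>x. x \<noteq> m) \<pi>"
  define R where "R = tl (dropWhile (\<lambda>x. x \<noteq> m) \<pi>)"
  have p: "\<pi> = L @ m # R" using split_max[OF mp] L_def R_def by simp
  have mL: "m \<notin> set L" and mR: "m \<notin> set R" using dp p by auto
  have Ls: "\<forall>x\<in>set L. x < m" using mL setp p lt by auto
  have Rs: "\<forall>x\<in>set R. x < m" using mR setp p lt by auto
  have "stack_sort L @ stack_sort R @ [m] = \<sigma>' @ [m]" using sp p ss_mid[OF Ls Rs] by simp
  then have e: "stack_sort L @ stack_sort R = \<sigma>'" by simp
  define k where "k = length L"
  have t: "take k \<sigma>' = stack_sort L" and dd: "drop k \<sigma>' = stack_sort R"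
    using e k_def by (metis append_eq_conv_conj length_ss)+
  have kle: "k \<le> length \<sigma>'" using e k_def by (metis le_add1 length_append length_ss)
  have "L \<in> fib (take k \<sigma>')" "R \<in> fib (drop k \<sigma>')" using t dd dp p unfolding fib_def by auto
  then show "\<pi> \<in> (\<lambda>(k, L, R). L @ m # R) `
           (SIGMA k:{..length \<sigma>'}. fib (take k \<sigma>') \<times> fib (drop k \<sigma>'))"
    using kle p by (auto intro!: image_eqI[of _ _ "(k, L, R)"])
next
  fix \<pi> assume "\<pi> \<in> (\<lambda>(k, L, R). L @ m # R) `
           (SIGMA k:{..length \<sigma>'}. fib (take k \<sigma>') \<times> fib (drop k \<sigma>'))"
  then obtain k L R where p: "\<pi> = L @ m # R" and k: "k \<le> length \<sigma>'"
    and L: "L \<in> fib (take k \<sigma>')" and R: "R \<in> fib (drop k \<sigma>')" by auto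
  have sL: "stack_sort L = take k \<sigma>'" and dL: "distinct L" using L unfolding fib_def by auto
  have sR: "stack_sort R = drop k \<sigma>'" and dR: "distinct R" using R unfolding fib_def by auto
  have setL: "set L = set (take k \<sigma>')" using sL set_ss[of L] by simp
  have setR: "set R = set (drop k \<sigma>')" using sR set_ss[of R] by simp
  have Ls: "\<forall>x\<in>set L. x < m" using setL lt by (auto dest: in_set_takeD)
  have Rs: "\<forall>x\<in>set R. x < m" using setR lt by (auto dest: in_set_dropD)
  have dis: "set L \<inter> set R = {}" using setL setR d
    by (metis append_take_drop_id distinct_append)
  have "distinct \<pi>" using p dL dR dis Ls Rs by auto
  moreover have "stack_sort \<pi> = \<sigma>' @ [m]" using p ss_mid[OF Ls Rs] sL sR by simp
  ultimately show "\<pi> \<in> fib (\<sigma>' @ [m])" unfolding fib_def by simp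
qed

lemma fib_inj:
  assumes lt: "\<forall>x\<in>set \<sigma>'. x < m"
  shows "inj_on (\<lambda>(k, L, R). L @ m # R)
           (SIGMA k:{..length \<sigma>'}. fib (take k \<sigma>') \<times> fib (drop k \<sigma>'))"
proof (rule inj_onI)
  fix x y
  assume x: "x \<in> (SIGMA k:{..length \<sigma>'}. fib (take k \<sigma>') \<times> fib (drop k \<sigma>'))"
    and y: "y \<in> (SIGMA k:{..length \<sigma>'}. fib (take k \<sigma>') \<times> fib (drop k \<sigma>'))"
    and exy: "(\<lambda>(k, L, R). L @ m # R) x = (\<lambda>(k, L, R). L @ m # R) y"
  obtain k L R where xe: "x = (k, L, R)" by (cases x) auto
  obtain k' L' R' where ye: "y = (k', L', R')" by (cases y) auto
  have k: "k \<le> length \<sigma>'" and L: "L \<in> fib (take k \<sigma>')" and R: "R \<in> fib (drop k \<sigma>')"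
    using x xe by auto
  have k': "k' \<le> length \<sigma>'" and L': "L' \<in> fib (take k' \<sigma>')" using y ye by auto
  have e: "L @ m # R = L' @ m # R'" using exy xe ye by simp
  have sL: "stack_sort L = take k \<sigma>'" using L unfolding fib_def by auto
  have sL': "stack_sort L' = take k' \<sigma>'" using L' unfolding fib_def by auto
  have "m \<notin> set L" using sL set_ss[of L] lt by (auto dest: in_set_takeD)
  moreover have "m \<notin> set R" using R set_ss[of R] lt unfolding fib_def by (auto dest: in_set_dropD)
  ultimately have "L = L' \<and> R = R'" using e append_Cons_eq_iff by metis
  then have "L = L'" "R = R'" by auto
  moreover have "length L = k" using sL k length_ss[of L] by simp
  moreover have "length L' = k'" using sL' k' length_ss[of L'] by simp
  ultimately show "x = y" using xe ye by simp
qed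

lemma fib_sum:
  assumes d: "distinct (\<sigma>' @ [m])" and lt: "\<forall>x\<in>set \<sigma>'. x < m"
  shows "sum F (fib (\<sigma>' @ [m])) =
    (\<Sum>k\<le>length \<sigma>'. \<Sum>L\<in>fib (take k \<sigma>'). \<Sum>R\<in>fib (drop k \<sigma>'). F (L @ m # R))"
proof -
  have "sum F (fib (\<sigma>' @ [m])) = (\<Sum>(k, L, R)\<in>(SIGMA k:{..length \<sigma>'}. fib (take k \<sigma>') \<times> fib (drop k \<sigma>')). F (L @ m # R))"
    unfolding fib_image[OF d lt] by (subst sum.reindex[OF fib_inj[OF lt]]) (simp add: case_prod_unfold)
  also have "\<dots> = (\<Sum>k\<le>length \<sigma>'. \<Sum>(L, R)\<in>fib (take k \<sigma>') \<times> fib (drop k \<sigma>'). F (L @ m # R))"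
    by (subst sum.Sigma) (auto simp: fib_finite)
  also have "\<dots> = (\<Sum>k\<le>length \<sigma>'. \<Sum>L\<in>fib (take k \<sigma>'). \<Sum>R\<in>fib (drop k \<sigma>'). F (L @ m # R))"
    by (simp add: sum.cartesian_product)
  finally show ?thesis .
qed


lemma fib_set: "L \<in> fib s \<Longrightarrow> set L = set s"
  unfolding fib_def using set_ss by auto

lemma fib_len: "L \<in> fib s \<Longrightarrow> length L = length s"
  unfolding fib_def using length_ss by auto

lemma split_stats:
  assumes L: "L \<in> fib (take k s)" and R: "R \<in> fib (drop k s)" and lt: "\<forall>x\<in>set s. x < m"
  shows "evh (L @ m # R) b = (if b then 1 else 0) + evh L b + evh R (\<not> b)"
    and "des (L @ m # R) = des L + des R + (if drop k s = [] then 0 else 1)"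
proof -
  have Ls: "\<forall>x\<in>set L. x < m" using fib_set[OF L] lt by (auto dest: in_set_takeD)
  have Rs: "\<forall>x\<in>set R. x < m" using fib_set[OF R] lt by (auto dest: in_set_dropD)
  show "evh (L @ m # R) b = (if b then 1 else 0) + evh L b + evh R (\<not> b)" by (rule evh_mid[OF Ls Rs])
  have "R = [] \<longleftrightarrow> drop k s = []" using fib_len[OF R] by auto
  then show "des (L @ m # R) = des L + des R + (if drop k s = [] then 0 else 1)"
    using des_mid[OF Ls Rs] by simp
qed

lemma shift_ends:
  fixes c :: "nat \<Rightarrow> 'a::comm_ring_1"
  assumes "c 0 = c (Suc M)"
  shows "(\<Sum>k\<le>Suc M. (if k = 0 then 1 else t) * c k) = (\<Sum>k\<le>Suc M. (if k = Suc M then 1 else t) * c k)"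
proof -
  have e1: "(\<Sum>i\<le>Suc M. t * c i) = t * c 0 + (\<Sum>i\<le>M. t * c (Suc i))" by (rule sum.atMost_Suc_shift)
  have e2: "(\<Sum>i\<le>Suc M. t * c i) = (\<Sum>i\<le>M. t * c i) + t * c (Suc M)" by simp
  have X: "(\<Sum>i\<le>M. t * c (Suc i)) = (\<Sum>i\<le>M. t * c i)"
    using e1 e2 assms by (simp add: add.commute)
  have l: "(\<Sum>k\<le>Suc M. (if k = 0 then 1 else t) * c k) = c 0 + (\<Sum>i\<le>M. t * c (Suc i))"
    by (subst sum.atMost_Suc_shift) simp
  have r: "(\<Sum>k\<le>Suc M. (if k = Suc M then 1 else t) * c k) = (\<Sum>i\<le>M. t * c i) + c (Suc M)"
    by simp
  show ?thesis using l r X assms by (simp add: add.commute)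
qed

lemma fib_main:
  fixes t :: "'a::comm_ring_1"
  shows "(\<Sum>\<pi>\<in>fib \<sigma>. t ^ evh \<pi> False) = (\<Sum>\<pi>\<in>fib \<sigma>. t ^ des \<pi>) \<and>
         (\<Sum>\<pi>\<in>fib \<sigma>. t ^ evh \<pi> True) = (if \<sigma> = [] then 1 else t) * (\<Sum>\<pi>\<in>fib \<sigma>. t ^ des \<pi>)"
proof (induction "length \<sigma>" arbitrary: \<sigma> rule: less_induct)
  case less
  define D where "D = (\<lambda>s. \<Sum>\<pi>\<in>fib s. t ^ des \<pi>)"
  define A where "A = (\<lambda>s b. \<Sum>\<pi>\<in>fib s. t ^ evh \<pi> b)"
  have IH: "A s False = D s \<and> A s True = (if s = [] then 1 else t) * D s" if "length s < length \<sigma>" for s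
    using less.hyps[OF that] unfolding A_def D_def by simp
  show ?case
  proof (cases "fib \<sigma> = {}")
    case True then show ?thesis by simp
  next
    case False
    then obtain \<pi>0 where p0: "\<pi>0 \<in> fib \<sigma>" by blast
    show ?thesis
    proof (cases "\<sigma> = []")
      case True then show ?thesis by (simp add: fib_Nil des_def)
    next
      case sne: False
      have dp0: "distinct \<pi>0" and sp0: "stack_sort \<pi>0 = \<sigma>" using p0 unfolding fib_def by auto
      have "\<pi>0 \<noteq> []" using sp0 sne by auto
      define m where "m = Max (set \<pi>0)"
      have mp: "m \<in> set \<pi>0" using \<open>\<pi>0 \<noteq> []\<close> m_def by simp
      define L0 where "L0 = takeWhile (\<lambda>x. x \<noteq> m) \<pi>0"
      define R0 where "R0 = tl (dropWhile (\<lambda>x. x \<noteq> m) \<pi>0)"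
      have p: "\<pi>0 = L0 @ m # R0" using split_max[OF mp] L0_def R0_def by simp
      have mL: "m \<notin> set L0" and mR: "m \<notin> set R0" using dp0 p by auto
      have "\<forall>x\<in>set \<pi>0. x \<le> m" using m_def by simp
      then have Ls: "\<forall>x\<in>set L0. x < m" and Rs: "\<forall>x\<in>set R0. x < m"
        using mL mR p by (auto simp: le_less)
      define \<sigma>' where "\<sigma>' = stack_sort L0 @ stack_sort R0"
      have sig: "\<sigma> = \<sigma>' @ [m]" using sp0 p ss_mid[OF Ls Rs] \<sigma>'_def by simp
      have lt: "\<forall>x\<in>set \<sigma>'. x < m" using Ls Rs \<sigma>'_def by auto
      have d: "distinct (\<sigma>' @ [m])" using dp0 sp0 sig mset_ss[of \<pi>0] mset_eq_imp_distinct_iff by metis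
      define N where "N = length \<sigma>'"
      define u where "u = (\<lambda>k. take k \<sigma>')"
      define v where "v = (\<lambda>k. drop k \<sigma>')"
      have lu: "length (u k) < length \<sigma>" for k using sig u_def by simp
      have lv: "length (v k) < length \<sigma>" for k using sig v_def by simp
      have sumF: "sum F (fib \<sigma>) = (\<Sum>k\<le>N. \<Sum>L\<in>fib (u k). \<Sum>R\<in>fib (v k). F (L @ m # R))" for F
        unfolding sig N_def u_def v_def by (rule fib_sum[OF d lt])
      have AF: "A \<sigma> False = (\<Sum>k\<le>N. A (u k) False * A (v k) True)"
        unfolding A_def sumF sum_product
        by (intro sum.cong refl) (simp add: split_stats(1)[OF _ _ lt] u_def v_def power_add)
      have AT0: "A \<sigma> True = (\<Sum>k\<le>N. \<Sum>L\<in>fib (u k). \<Sum>R\<in>fib (v k). t * (t ^ evh L True * t ^ evh R False))"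
        unfolding A_def sumF
        by (intro sum.cong refl) (simp add: split_stats(1)[OF _ _ lt] u_def v_def power_add mult_ac)
      have AT: "A \<sigma> True = (\<Sum>k\<le>N. t * (A (u k) True * A (v k) False))"
        unfolding AT0 by (unfold A_def, intro sum.cong refl) (simp only: sum_product, simp only: sum_distrib_left)
      have DD0: "D \<sigma> = (\<Sum>k\<le>N. \<Sum>L\<in>fib (u k). \<Sum>R\<in>fib (v k). t ^ des L * t ^ des R * (if v k = [] then 1 else t))"
        unfolding D_def sumF
        by (intro sum.cong refl) (simp add: split_stats(2)[OF _ _ lt] u_def v_def power_add)
      have DD: "D \<sigma> = (\<Sum>k\<le>N. D (u k) * D (v k) * (if v k = [] then 1 else t))"
        unfolding DD0 by (unfold D_def, intro sum.cong refl) (simp only: sum_product, simp only: sum_distrib_right)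
      have first: "A \<sigma> False = D \<sigma>"
        unfolding AF DD using IH[OF lu] IH[OF lv] by (intro sum.cong refl) (simp add: mult.commute)
      have "A \<sigma> True = t * (\<Sum>k\<le>N. (if u k = [] then 1 else t) * (D (u k) * D (v k)))"
        unfolding AT sum_distrib_left using IH[OF lu] IH[OF lv]
        by (intro sum.cong refl) (simp add: mult_ac)
      also have "\<dots> = t * (\<Sum>k\<le>N. (if v k = [] then 1 else t) * (D (u k) * D (v k)))"
      proof (cases N)
        case 0 then show ?thesis by (simp add: u_def v_def N_def)
      next
        case (Suc M)
        have D0: "D [] = 1" by (simp add: D_def fib_Nil des_def)
        have "(\<Sum>k\<le>N. (if u k = [] then 1 else t) * (D (u k) * D (v k)))
            = (\<Sum>k\<le>Suc M. (if k = 0 then 1 else t) * (D (u k) * D (v k)))"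
          using Suc by (intro sum.cong refl) (auto simp: u_def N_def)
        also have "\<dots> = (\<Sum>k\<le>Suc M. (if k = Suc M then 1 else t) * (D (u k) * D (v k)))"
          by (rule shift_ends) (use Suc D0 in \<open>simp add: u_def v_def N_def\<close>)
        also have "\<dots> = (\<Sum>k\<le>N. (if v k = [] then 1 else t) * (D (u k) * D (v k)))"
          using Suc by (intro sum.cong refl) (auto simp: v_def N_def)
        finally show ?thesis by simp
      qed
      also have "\<dots> = t * D \<sigma>" unfolding DD by (simp add: mult_ac)
      finally show ?thesis using first sne unfolding A_def D_def by simp
    qed
  qed
qed


lemma evh_sorted: "sorted_wrt (<) xs \<Longrightarrow> evh xs False = 0"
proof (induction xs)
  case Nil then show ?case by simp
next
  case (Cons a xs)
  have t: "takeWhile (\<lambda>x. x < a) xs = []" using Cons.prems by (cases xs) auto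
  have d: "dropWhile (\<lambda>x. x < a) xs = xs" using Cons.prems by (intro dropWhile_id) auto
  show ?case using Cons t d by simp
qed

lemma dr_sorted: "sorted_wrt (<) xs \<Longrightarrow> dr xs = 0"
  by (induction xs rule: dr.induct) auto

lemma funpow_ss_Suc: "(stack_sort ^^ Suc r) x = (stack_sort ^^ r) (stack_sort x)"
  by (simp only: funpow_Suc_right o_apply)

lemma SP0: "sortable_perms n 0 = {[1..<n+1]}"
  unfolding sortable_perms_def permutations_of_set_def by auto

lemma SP_Suc_group:
  assumes "\<sigma> \<in> sortable_perms n r"
  shows "{x \<in> sortable_perms n (Suc r). stack_sort x = \<sigma>} = fib \<sigma>"
proof (rule set_eqI iffI)+
  fix x assume "x \<in> {x \<in> sortable_perms n (Suc r). stack_sort x = \<sigma>}"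
  then show "x \<in> fib \<sigma>" unfolding sortable_perms_def permutations_of_set_def fib_def by auto
next
  fix x assume x: "x \<in> fib \<sigma>"
  have "distinct x" "stack_sort x = \<sigma>" using x unfolding fib_def by auto
  moreover have "set x = {1..n}" using fib_set[OF x] assms
    unfolding sortable_perms_def permutations_of_set_def by auto
  moreover have "(stack_sort ^^ r) \<sigma> = [1..<n+1]" using assms unfolding sortable_perms_def by auto
  ultimately show "x \<in> {x \<in> sortable_perms n (Suc r). stack_sort x = \<sigma>}"
    unfolding sortable_perms_def permutations_of_set_def funpow_ss_Suc by simp
qed

lemma SP_finite: "finite (sortable_perms n r)"
  by (rule finite_subset[of _ "permutations_of_set {1..n}"]) (auto simp: sortable_perms_def)

lemma SP_image: "stack_sort ` sortable_perms n (Suc r) \<subseteq> sortable_perms n r"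
proof
  fix y assume "y \<in> stack_sort ` sortable_perms n (Suc r)"
  then obtain x where x: "x \<in> sortable_perms n (Suc r)" and y: "y = stack_sort x" by auto
  have "distinct y" using x y mset_ss[of x] mset_eq_imp_distinct_iff
    unfolding sortable_perms_def permutations_of_set_def by auto
  moreover have "set y = {1..n}" using x y unfolding sortable_perms_def permutations_of_set_def by auto
  moreover have "(stack_sort ^^ r) y = [1..<n+1]" using x y
    unfolding sortable_perms_def funpow_ss_Suc by simp
  ultimately show "y \<in> sortable_perms n r" unfolding sortable_perms_def permutations_of_set_def by auto
qed

theorem corollary7p3:
  fixes n r :: nat
  shows "(\<Sum>\<pi>\<in>sortable_perms n r. [:0, 1:] ^ veh \<pi>)
       = (\<Sum>\<pi>\<in>sortable_perms n r. ([:0, 1:] :: int poly) ^ des \<pi>)"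
proof (cases r)
  case 0
  have "veh [1..<n+1] = 0" unfolding veh_def by (rule evh_sorted, rule sorted_wrt_upt)
  moreover have "des [1..<n+1] = 0" unfolding des_dr by (rule dr_sorted, rule sorted_wrt_upt)
  ultimately show ?thesis using 0 by (simp add: SP0)
next
  case (Suc r')
  let ?t = "[:0, 1:] :: int poly"
  have g: "sum h (sortable_perms n (Suc r')) = (\<Sum>\<sigma>\<in>sortable_perms n r'. sum h (fib \<sigma>))" for h :: "nat list \<Rightarrow> int poly"
  proof -
    have "sum h (sortable_perms n (Suc r')) = (\<Sum>\<sigma>\<in>sortable_perms n r'. sum h {x \<in> sortable_perms n (Suc r'). stack_sort x = \<sigma>})"
      by (rule sum.group[symmetric]) (auto simp: SP_finite SP_image)
    also have "\<dots> = (\<Sum>\<sigma>\<in>sortable_perms n r'. sum h (fib \<sigma>))"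
      by (rule sum.cong[OF refl]) (simp add: SP_Suc_group)
    finally show ?thesis .
  qed
  show ?thesis unfolding Suc g veh_def
    by (rule sum.cong[OF refl]) (rule conjunct1[OF fib_main])
qed

end
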